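(* Let $a,b,c,d\in\mathbb{R}$ and $w=a\mathbb{I}+bV_{(AB)}+cV_{(AC)}+dV_{(BC)}$ on $(\mathbb{C}^2)^{\otimes3}$. Then $w$ is local-positive if and only if $$a+b\cos^2\theta+c\cos^2\Omega+d\cos^2(\theta-\Omega)\ge0\quad\text{for all }\theta,\Omega\in\mathbb{R}.$$
   Context: $V_{(XY)}$ denotes the operator swapping tensor factors $X$ and $Y$ among the three qubit factors $A,B,C$. An operator $M$ on $(\mathbb{C}^2)^{\otimes3}$ is local-positive if $\langle\psi_1\psi_2\psi_3|M|\psi_1\psi_2\psi_3\rangle\ge0$ for all unit vectors $\psi_1,\psi_2,\psi_3\in\mathbb{C}^2$. *)

theory Defs
  imports Complex_Main "HOL-Library.Complex_Order"
begin

text \<open>Three-qubit space (C^2)^(tensor 3): computational basis indexed by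
  triples (i,j,k) with i,j,k in {0,1} (factors A,B,C). Operators are 8x8
  complex matrices given by their entries.\<close>

type_synonym idx3 = "nat \<times> nat \<times> nat"
type_synonym op3 = "idx3 \<Rightarrow> idx3 \<Rightarrow> complex"

definition basis3 :: "idx3 set" where
  "basis3 = {..<2} \<times> {..<2} \<times> {..<2}"

text \<open>A vector of C^2, given by its coordinates psi 0, psi 1.\<close>
definition unit_qubit :: "(nat \<Rightarrow> complex) \<Rightarrow> bool" where
  "unit_qubit \<psi> \<longleftrightarrow> (cmod (\<psi> 0))\<^sup>2 + (cmod (\<psi> 1))\<^sup>2 = 1"

definition prod_state :: "(nat \<Rightarrow> complex) \<Rightarrow> (nat \<Rightarrow> complex) \<Rightarrow> (nat \<Rightarrow> complex) \<Rightarrow> idx3 \<Rightarrow> complex" where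
  "prod_state \<psi>1 \<psi>2 \<psi>3 = (\<lambda>(i,j,k). \<psi>1 i * \<psi>2 j * \<psi>3 k)"

definition expval :: "op3 \<Rightarrow> (idx3 \<Rightarrow> complex) \<Rightarrow> complex" where
  "expval M v = (\<Sum>x\<in>basis3. \<Sum>y\<in>basis3. cnj (v x) * M x y * v y)"

definition local_positive :: "op3 \<Rightarrow> bool" where
  "local_positive M \<longleftrightarrow>
     (\<forall>\<psi>1 \<psi>2 \<psi>3. unit_qubit \<psi>1 \<and> unit_qubit \<psi>2 \<and> unit_qubit \<psi>3
        \<longrightarrow> expval M (prod_state \<psi>1 \<psi>2 \<psi>3) \<ge> 0)"

definition id3 :: op3 where
  "id3 x y = (if x = y then 1 else 0)"

text \<open>Swap operators: V_AB |i j k> = |j i k>, etc.\<close>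
definition swapAB :: op3 where
  "swapAB x y = (case x of (i',j',k') \<Rightarrow> case y of (i,j,k) \<Rightarrow>
      if i' = j \<and> j' = i \<and> k' = k then 1 else 0)"

definition swapAC :: op3 where
  "swapAC x y = (case x of (i',j',k') \<Rightarrow> case y of (i,j,k) \<Rightarrow>
      if i' = k \<and> j' = j \<and> k' = i then 1 else 0)"

definition swapBC :: op3 where
  "swapBC x y = (case x of (i',j',k') \<Rightarrow> case y of (i,j,k) \<Rightarrow>
      if i' = i \<and> j' = k \<and> k' = j then 1 else 0)"

end

theory Submission
  imports Defs
begin

definition ip :: "(nat \<Rightarrow> complex) \<Rightarrow> (nat \<Rightarrow> complex) \<Rightarrow> complex" where
 "ip u v = cnj (u 0) * v 0 + cnj (u 1) * v 1"

lemma ip_swap: "ip v u = cnj (ip u v)" by (simp add: ip_def mult.commute)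

lemma ip_self: "unit_qubit u \<Longrightarrow> ip u u = 1"
proof -
  assume "unit_qubit u"
  hence "complex_of_real ((cmod (u 0))\<^sup>2 + (cmod (u 1))\<^sup>2) = 1" by (simp add: unit_qubit_def)
  moreover have "ip u u = complex_of_real ((cmod (u 0))\<^sup>2 + (cmod (u 1))\<^sup>2)"
    by (simp only: ip_def of_real_add complex_norm_square mult.commute)
  ultimately show ?thesis by simp
qed

lemma cs0: "(cnj a0 * a0 + cnj a1 * a1) * (cnj b0 * b0 + cnj b1 * b1) - (cnj a0 * b0 + cnj a1 * b1) * (cnj b0 * a0 + cnj b1 * a1)
  = (a0 * b1 - a1 * b0) * (cnj a0 * cnj b1 - cnj a1 * cnj b0)"
  by algebra

lemma cs_ident: "ip u u * ip v v - ip u v * ip v u = (u 0 * v 1 - u 1 * v 0) * cnj (u 0 * v 1 - u 1 * v 0)"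
  unfolding ip_def complex_cnj_diff complex_cnj_mult by (rule cs0)

lemma g0: "(cnj a0 * a0 + cnj a1 * a1) * (cnj b0 * b0 + cnj b1 * b1) * (cnj c0 * c0 + cnj c1 * c1)
  + (cnj a0 * b0 + cnj a1 * b1) * (cnj b0 * c0 + cnj b1 * c1) * (cnj c0 * a0 + cnj c1 * a1)
  + (cnj a0 * c0 + cnj a1 * c1) * (cnj c0 * b0 + cnj c1 * b1) * (cnj b0 * a0 + cnj b1 * a1)
  - (cnj a0 * a0 + cnj a1 * a1) * (cnj b0 * c0 + cnj b1 * c1) * (cnj c0 * b0 + cnj c1 * b1)
  - (cnj b0 * b0 + cnj b1 * b1) * (cnj a0 * c0 + cnj a1 * c1) * (cnj c0 * a0 + cnj c1 * a1)
  - (cnj c0 * c0 + cnj c1 * c1) * (cnj a0 * b0 + cnj a1 * b1) * (cnj b0 * a0 + cnj b1 * a1) = (0::complex)"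
  by algebra

lemma lin: fixes P Q R :: complex
  assumes "1*1*1 + P*Q*cnj R + R*cnj Q*cnj P - 1*Q*cnj Q - 1*R*cnj R - 1*P*cnj P = 0"
  shows "1 + (P*Q*cnj R + cnj (P*Q*cnj R)) - P*cnj P - R * cnj R - Q * cnj Q = 0"
  using assms by (simp add: algebra_simps)

lemma cs: "unit_qubit u \<Longrightarrow> unit_qubit v \<Longrightarrow> (cmod (ip u v))^2 \<le> 1"
proof -
  assume a: "unit_qubit u" "unit_qubit v"
  define z where "z = u 0 * v 1 - u 1 * v 0"
  have "1 - ip u v * cnj (ip u v) = z * cnj z"
    using cs_ident[of u v] unfolding z_def ip_self[OF a(1)] ip_self[OF a(2)] ip_swap[of v u] by simp
  moreover have "complex_of_real (1 - (cmod (ip u v))^2) = 1 - ip u v * cnj (ip u v)"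
    by (simp only: of_real_diff of_real_1 complex_norm_square)
  moreover have "complex_of_real ((cmod z)^2) = z * cnj z"
    by (simp only: complex_norm_square)
  ultimately have "1 - (cmod (ip u v))^2 = (cmod z)^2" using of_real_eq_iff by metis
  thus ?thesis by (metis diff_ge_0_iff_ge zero_le_power2)
qed

lemma gram_ident: "ip u u * ip v v * ip w w + ip u v * ip v w * ip w u + ip u w * ip w v * ip v u
   - ip u u * ip v w * ip w v - ip v v * ip u w * ip w u - ip w w * ip u v * ip v u = 0"
  unfolding ip_def by (rule g0)

lemma gram:
  assumes "unit_qubit u" "unit_qubit v" "unit_qubit w"
  shows "((cmod (ip u v))^2 + (cmod (ip u w))^2 + (cmod (ip v w))^2 - 1)^2
     \<le> 4 * (cmod (ip u v))^2 * (cmod (ip u w))^2 * (cmod (ip v w))^2"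
proof -
  define t where "t = ip u v * ip v w * ip w u"
  have h: "1 + (t + cnj t) - ip u v * cnj (ip u v) - ip u w * cnj (ip u w) - ip v w * cnj (ip v w) = 0"
    using gram_ident[of u v w] unfolding t_def ip_self[OF assms(1)] ip_self[OF assms(2)] ip_self[OF assms(3)]
      ip_swap[of w v] ip_swap[of v u] ip_swap[of w u]
    by (rule lin)
  have h2: "complex_of_real (1 + 2 * Re t - (cmod (ip u v))^2 - (cmod (ip u w))^2 - (cmod (ip v w))^2)
     = 1 + (t + cnj t) - ip u v * cnj (ip u v) - ip u w * cnj (ip u w) - ip v w * cnj (ip v w)"
    by (simp only: of_real_add of_real_diff of_real_1 complex_add_cnj complex_norm_square)
  from h h2 have "complex_of_real (1 + 2 * Re t - (cmod (ip u v))^2 - (cmod (ip u w))^2 - (cmod (ip v w))^2) = 0"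
    by simp
  hence e: "2 * Re t = (cmod (ip u v))^2 + (cmod (ip u w))^2 + (cmod (ip v w))^2 - 1"
    by (subst (asm) of_real_eq_0_iff) linarith
  have "(Re t)^2 \<le> (cmod t)^2" by (simp add: abs_Re_le_cmod power_mono abs_le_square_iff[symmetric])
  also have "(cmod t)^2 = (cmod (ip u v))^2 * (cmod (ip u w))^2 * (cmod (ip v w))^2"
    unfolding t_def by (simp add: norm_mult power_mult_distrib ip_swap[of w u] complex_mod_cnj)
  finally have f: "(Re t)^2 \<le> (cmod (ip u v))^2 * (cmod (ip u w))^2 * (cmod (ip v w))^2" .
  show ?thesis using f unfolding e[symmetric] by (simp add: power_mult_distrib)
qed

lemma sum_prod2: "finite A \<Longrightarrow> finite B \<Longrightarrow> sum f (A \<times> B) = (\<Sum>a\<in>A. \<Sum>b\<in>B. f (a,b))"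
  by (simp add: sum.cartesian_product)
lemma sum_basis3: "(\<Sum>x\<in>basis3. f x) = f (0,0,0)+f(0,0,1)+f(0,1,0)+f(0,1,1)+f(1,0,0)+f(1,0,1)+f(1,1,0)+f(1,1,1)"
proof -
  have e: "{..<2::nat} = {0,1}" by auto
  show ?thesis unfolding basis3_def e
    by (simp only: sum_prod2 finite.intros finite_SigmaI) (simp add: algebra_simps)
qed



lemma expval_W:
  "expval (\<lambda>x y. complex_of_real a * id3 x y + complex_of_real b * swapAB x y
            + complex_of_real c * swapAC x y + complex_of_real d * swapBC x y) (prod_state u v w)
   = of_real a * ip u u * ip v v * ip w w + of_real b * ip u v * ip v u * ip w w
     + of_real c * ip u w * ip w u * ip v v + of_real d * ip v w * ip w v * ip u u"
  unfolding expval_def sum_basis3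
  by (simp add: prod_state_def id3_def swapAB_def swapAC_def swapBC_def ip_def algebra_simps)

lemma key:
  fixes a b c d p q r :: real
  assumes p: "0 \<le> p" "p \<le> 1" and q: "0 \<le> q" "q \<le> 1"
    and g: "(p+q+r-1)^2 \<le> 4*p*q*r"
    and H: "\<forall>\<theta> \<Omega> :: real. a + b * (cos \<theta>)\<^sup>2 + c * (cos \<Omega>)\<^sup>2 + d * (cos (\<theta> - \<Omega>))\<^sup>2 \<ge> 0"
  shows "a + b*p + c*q + d*r \<ge> 0"
proof -
  define A where "A = sqrt p"
  define B where "B = sqrt q"
  define A' where "A' = sqrt (1-p)"
  define B' where "B' = sqrt (1-q)"
  have A2: "A^2 = p" "A \<ge> 0" "A \<le> 1" using p by (auto simp: A_def)
  have B2: "B^2 = q" "B \<ge> 0" "B \<le> 1" using q by (auto simp: B_def)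
  have A'2: "A'^2 = 1-p" "A' \<ge> 0" using p by (auto simp: A'_def)
  have B'2: "B'^2 = 1-q" "B' \<ge> 0" using q by (auto simp: B'_def)
  define th where "th = arccos A"
  define om where "om = arccos B"
  have cth: "cos th = A" using A2 by (simp add: th_def)
  have sth: "sin th = A'" using A2 by (simp add: th_def sin_arccos A'_def)
  have com: "cos om = B" using B2 by (simp add: om_def)
  have som: "sin om = B'" using B2 by (simp add: om_def sin_arccos B'_def)
  have e1: "(cos (th - om))\<^sup>2 = p*q + (1-p)*(1-q) + 2*(A*B*A'*B')"
  proof -
    have "(cos (th - om))\<^sup>2 = A^2*B^2 + A'^2*B'^2 + 2*(A*B*A'*B')"
      unfolding cos_diff cth sth com som by (simp add: power2_eq_square algebra_simps)
    thus ?thesis by (simp add: A2 B2 A'2 B'2)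
  qed
  have e2: "(cos (th - (-om)))\<^sup>2 = p*q + (1-p)*(1-q) - 2*(A*B*A'*B')"
  proof -
    have "(cos (th - (-om)))\<^sup>2 = A^2*B^2 + A'^2*B'^2 - 2*(A*B*A'*B')"
      unfolding cos_diff cth sth cos_minus sin_minus com som by (simp add: power2_eq_square algebra_simps)
    thus ?thesis by (simp add: A2 B2 A'2 B'2)
  qed
  have sq: "(A*B*A'*B')^2 = p*q*(1-p)*(1-q)"
    by (simp add: power_mult_distrib A2 B2 A'2 B'2)
  have id: "(r - p*q - (1-p)*(1-q))^2 = (p+q+r-1)^2 - 4*p*q*r + 4*(p*q*(1-p)*(1-q))"
    by (simp add: power2_eq_square algebra_simps)
  have "(r - p*q - (1-p)*(1-q))^2 \<le> (2*(A*B*A'*B'))^2"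
    using g id sq by (simp add: power_mult_distrib)
  hence bnd: "\<bar>r - p*q - (1-p)*(1-q)\<bar> \<le> 2*(A*B*A'*B')"
    using A2 B2 A'2 B'2 by (subst power2_le_iff_abs_le[symmetric]) simp_all
  show ?thesis
  proof (cases "d \<ge> 0")
    case True
    have "d * (p*q + (1-p)*(1-q) - 2*(A*B*A'*B')) \<le> d*r"
      using True bnd by (intro mult_left_mono) auto
    with H[rule_format, of th "-om"] show ?thesis
      unfolding e2 cos_minus com cth by (simp add: A2 B2)
  next
    case False
    have "d * (p*q + (1-p)*(1-q) + 2*(A*B*A'*B')) \<le> d*r"
      using False bnd by (intro mult_left_mono_neg) auto
    with H[rule_format, of th "om"] show ?thesis
      unfolding e1 com cth by (simp add: A2 B2)
  qed
qed

lemma expval_real: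
  assumes "unit_qubit u" "unit_qubit v" "unit_qubit w"
  shows "expval (\<lambda>x y. complex_of_real a * id3 x y + complex_of_real b * swapAB x y
            + complex_of_real c * swapAC x y + complex_of_real d * swapBC x y) (prod_state u v w)
   = complex_of_real (a + b * (cmod (ip u v))^2 + c * (cmod (ip u w))^2 + d * (cmod (ip v w))^2)"
  unfolding expval_W ip_self[OF assms(1)] ip_self[OF assms(2)] ip_self[OF assms(3)]
    ip_swap[of v u] ip_swap[of w u] ip_swap[of w v]
  by (simp only: of_real_add of_real_mult complex_norm_square mult_1_right mult.assoc)

lemma cplx_nonneg: "(0 \<le> complex_of_real x) = (0 \<le> x)"
  by (simp add: less_eq_complex_def)

theorem mainTheorem12:
  fixes a b c d :: real
  shows "local_positive (\<lambda>x y. complex_of_real a * id3 x y + complex_of_real b * swapAB x y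
            + complex_of_real c * swapAC x y + complex_of_real d * swapBC x y)
         \<longleftrightarrow> (\<forall>\<theta> \<Omega> :: real. a + b * (cos \<theta>)\<^sup>2 + c * (cos \<Omega>)\<^sup>2 + d * (cos (\<theta> - \<Omega>))\<^sup>2 \<ge> 0)"
proof
  assume LP: "local_positive (\<lambda>x y. complex_of_real a * id3 x y + complex_of_real b * swapAB x y
            + complex_of_real c * swapAC x y + complex_of_real d * swapBC x y)"
  show "\<forall>\<theta> \<Omega> :: real. a + b * (cos \<theta>)\<^sup>2 + c * (cos \<Omega>)\<^sup>2 + d * (cos (\<theta> - \<Omega>))\<^sup>2 \<ge> 0"
  proof (intro allI)
    fix th om :: real
    define u :: "nat \<Rightarrow> complex" where "u = (\<lambda>i. if i = 0 then 1 else 0)"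
    define v :: "nat \<Rightarrow> complex" where "v = (\<lambda>i. if i = 0 then of_real (cos th) else of_real (sin th))"
    define w :: "nat \<Rightarrow> complex" where "w = (\<lambda>i. if i = 0 then of_real (cos om) else of_real (sin om))"
    have uu: "unit_qubit u" by (simp add: unit_qubit_def u_def)
    have uv: "unit_qubit v" by (simp add: unit_qubit_def v_def)
    have uw: "unit_qubit w" by (simp add: unit_qubit_def w_def)
    have i1: "ip u v = of_real (cos th)" by (simp add: ip_def u_def v_def)
    have i2: "ip u w = of_real (cos om)" by (simp add: ip_def u_def w_def)
    have i3: "ip v w = of_real (cos (th - om))" by (simp add: ip_def v_def w_def cos_diff)
    have "0 \<le> expval (\<lambda>x y. complex_of_real a * id3 x y + complex_of_real b * swapAB x y
            + complex_of_real c * swapAC x y + complex_of_real d * swapBC x y) (prod_state u v w)"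
      using LP uu uv uw unfolding local_positive_def by blast
    thus "a + b * (cos th)\<^sup>2 + c * (cos om)\<^sup>2 + d * (cos (th - om))\<^sup>2 \<ge> 0"
      unfolding expval_real[OF uu uv uw] cplx_nonneg i1 i2 i3 norm_of_real power2_abs .
  qed
next
  assume H: "\<forall>\<theta> \<Omega> :: real. a + b * (cos \<theta>)\<^sup>2 + c * (cos \<Omega>)\<^sup>2 + d * (cos (\<theta> - \<Omega>))\<^sup>2 \<ge> 0"
  show "local_positive (\<lambda>x y. complex_of_real a * id3 x y + complex_of_real b * swapAB x y
            + complex_of_real c * swapAC x y + complex_of_real d * swapBC x y)"
    unfolding local_positive_def
  proof (intro allI impI)
    fix u v w assume "unit_qubit u \<and> unit_qubit v \<and> unit_qubit w"
    hence uu: "unit_qubit u" and uv: "unit_qubit v" and uw: "unit_qubit w" by auto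
    have "a + b * (cmod (ip u v))^2 + c * (cmod (ip u w))^2 + d * (cmod (ip v w))^2 \<ge> 0"
      by (rule key[OF _ cs[OF uu uv] _ cs[OF uu uw] gram[OF uu uv uw] H]) simp_all
    thus "0 \<le> expval (\<lambda>x y. complex_of_real a * id3 x y + complex_of_real b * swapAB x y
            + complex_of_real c * swapAC x y + complex_of_real d * swapBC x y) (prod_state u v w)"
      unfolding expval_real[OF uu uv uw] cplx_nonneg .
  qed
qed

end
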